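(* Let $X$ be a Hausdorff locally convex topological vector space over $\mathbb{R}$ with continuous dual $X^*$, let $V\subset X$ be compact, let $K\subset\mathbb{R}^d$ be compact, let $m\ge1$, and let $G:V\to C(K;\mathbb{R}^m)$ be continuous, where $C(K;\mathbb{R}^m)$ carries the uniform norm $\|h\|_K=\sup_{y\in K}\|h(y)\|_{\mathbb{R}^m}$. Assume $\sigma\in C(\mathbb{R})$ is a Tauber--Wiener function. Then for every $\varepsilon>0$ there exist an integer $N\ge1$, vectors $\omega_1,\dots,\omega_N\in\mathbb{R}^d$, scalars $\zeta_1,\dots,\zeta_N\in\mathbb{R}$, defining ridge functions $\phi_k(y)=\sigma(\omega_k\cdot y+\zeta_k)$, and single-hidden-layer topological neural networks $a_k:X\to\mathbb{R}^m$, $k=1,\dots,N$, such that \[ \sup_{u\in V}\ \sup_{y\in K}\Bigl\|G(u)(y)-\sum_{k=1}^N a_k(u)\,\phi_k(y)\Bigr\|_{\mathbb{R}^m}<\varepsilon . \]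
   Context: A function $\sigma:\mathbb{R}\to\mathbb{R}$ is a Tauber--Wiener function if the linear span of $\{t\mapsto\sigma(wt-\theta): w,\theta\in\mathbb{R}\}$ is dense in $C([a,b])$ (uniform norm) for every closed interval $[a,b]\subset\mathbb{R}$. A (vector-valued, single-hidden-layer) topological feedforward neural network on $X$ is a map $H:X\to\mathbb{R}^m$ of the form $H(x)=A\,\sigma(T(x))$, where $T(x)=(f_1(x)-\theta_1,\dots,f_r(x)-\theta_r)$ for some $r\ge1$, $f_i\in X^*$, $\theta_i\in\mathbb{R}$, $A\in\mathbb{R}^{m\times r}$, and $\sigma$ acts componentwise on $\mathbb{R}^r$. $\|\cdot\|_{\mathbb{R}^m}$ is any fixed norm on $\mathbb{R}^m$; $\omega\cdot y$ is the Euclidean inner product. *)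

theory Defs
  imports "HOL-Analysis.Analysis"
begin

definition tvs_axioms :: "('a::{real_vector,topological_space}) itself \<Rightarrow> bool" where
  "tvs_axioms _ \<longleftrightarrow>
     continuous_on (UNIV :: ('a \<times> 'a) set) (\<lambda>(x, y). x + y) \<and>
     continuous_on (UNIV :: (real \<times> 'a) set) (\<lambda>(c, x). c *\<^sub>R x)"

definition locally_convex_space :: "('a::{real_vector,topological_space}) itself \<Rightarrow> bool" where
  "locally_convex_space _ \<longleftrightarrow>
     (\<forall>(x::'a) U. open U \<and> x \<in> U \<longrightarrow> (\<exists>W. open W \<and> convex W \<and> x \<in> W \<and> W \<subseteq> U))"

definition continuous_dual :: "('a::{real_vector,topological_space} \<Rightarrow> real) set" where
  "continuous_dual = {f. linear f \<and> continuous_on UNIV f}"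

definition is_norm :: "('a::real_vector \<Rightarrow> real) \<Rightarrow> bool" where
  "is_norm N \<longleftrightarrow> (\<forall>x. 0 \<le> N x) \<and> (\<forall>x. N x = 0 \<longleftrightarrow> x = 0) \<and>
     (\<forall>c x. N (c *\<^sub>R x) = \<bar>c\<bar> * N x) \<and> (\<forall>x y. N (x + y) \<le> N x + N y)"

definition tauber_wiener :: "(real \<Rightarrow> real) \<Rightarrow> bool" where
  "tauber_wiener \<sigma> \<longleftrightarrow>
     (\<forall>a b f e. a \<le> b \<and> continuous_on {a..b} f \<and> e > 0 \<longrightarrow>
        (\<exists>(n::nat) (c::nat \<Rightarrow> real) (w::nat \<Rightarrow> real) (\<theta>::nat \<Rightarrow> real).
           \<forall>t\<in>{a..b}. \<bar>f t - (\<Sum>i<n. c i * \<sigma> (w i * t - \<theta> i))\<bar> < e))"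

definition topological_nn ::
  "(real \<Rightarrow> real) \<Rightarrow> ('a::{real_vector,topological_space} \<Rightarrow> real ^ 'm) \<Rightarrow> bool" where
  "topological_nn \<sigma> H \<longleftrightarrow>
     (\<exists>(r::nat) (f::nat \<Rightarrow> 'a \<Rightarrow> real) (\<theta>::nat \<Rightarrow> real) (A::'m \<Rightarrow> nat \<Rightarrow> real).
        r \<ge> 1 \<and> (\<forall>i<r. f i \<in> continuous_dual) \<and>
        H = (\<lambda>x. \<chi> j. \<Sum>i<r. A j i * \<sigma> (f i x - \<theta> i)))"

end

theory Submission
  imports Defs
begin


lemma hb_sublinear:
  fixes p :: "'a::real_vector \<Rightarrow> real" and x0 :: 'a
  assumes sub: "\<And>x y. p (x + y) \<le> p x + p y"
    and hom: "\<And>c x. c > 0 \<Longrightarrow> p (c *\<^sub>R x) = c * p x"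
    and x0: "x0 \<noteq> 0"
  shows "\<exists>f. linear f \<and> (\<forall>x. f x \<le> p x) \<and> f x0 = p x0"
proof -
  have p0: "p 0 = 0" using hom[of 2 0] by simp
  define H0 where "H0 = {(x,a). \<exists>t. x = t *\<^sub>R x0 \<and> a = t * p x0}"
  define A where "A = {H :: ('a \<times> real) set. H0 \<subseteq> H \<and>
     (\<forall>x a b. (x,a) \<in> H \<longrightarrow> (x,b) \<in> H \<longrightarrow> a = b) \<and>
     (\<forall>x a y b. (x,a) \<in> H \<longrightarrow> (y,b) \<in> H \<longrightarrow> (x+y,a+b) \<in> H) \<and>
     (\<forall>x a c. (x,a) \<in> H \<longrightarrow> (c *\<^sub>R x, c*a) \<in> H) \<and>
     (\<forall>x a. (x,a) \<in> H \<longrightarrow> a \<le> p x)}"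
  have dom_neg: "t * p x0 \<le> p (t *\<^sub>R x0)" for t
  proof (cases "t > 0")
    case True then show ?thesis using hom by simp
  next
    case False
    show ?thesis
    proof (cases "t = 0")
      case True then show ?thesis using p0 by simp
    next
      case False
      with \<open>\<not> t > 0\<close> have "-t > 0" by simp
      have "0 = p (t *\<^sub>R x0 + (-t) *\<^sub>R x0)" using p0 by (simp add: scaleR_left_distrib[symmetric])
      also have "\<dots> \<le> p (t *\<^sub>R x0) + p ((-t) *\<^sub>R x0)" by (rule sub)
      also have "p ((-t) *\<^sub>R x0) = - t * p x0" using hom[OF \<open>-t>0\<close>] by simp
      finally show ?thesis by simp
    qed
  qed
  have H0mem: "(x,a) \<in> H0 \<longleftrightarrow> (\<exists>t. x = t *\<^sub>R x0 \<and> a = t * p x0)" for x a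
    unfolding H0_def by simp
  have h1: "a = b" if m1: "(x,a) \<in> H0" and m2: "(x,b) \<in> H0" for x a b
  proof -
    obtain t where t: "x = t *\<^sub>R x0" "a = t * p x0" using m1 unfolding H0mem by blast
    obtain s where s: "x = s *\<^sub>R x0" "b = s * p x0" using m2 unfolding H0mem by blast
    have "t *\<^sub>R x0 = s *\<^sub>R x0" using t(1) s(1) by (rule subst)
    then have "t = s" using x0 scaleR_cancel_right by blast
    then show "a = b" using t(2) s(2) by simp
  qed
  have h2: "(x+y,a+b) \<in> H0" if m1: "(x,a) \<in> H0" and m2: "(y,b) \<in> H0" for x a y b
  proof -
    obtain t where t: "x = t *\<^sub>R x0" "a = t * p x0" using m1 unfolding H0mem by blast
    obtain s where s: "y = s *\<^sub>R x0" "b = s * p x0" using m2 unfolding H0mem by blast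
    show ?thesis unfolding H0mem using t s
      by (auto intro!: exI[of _ "t+s"] simp: scaleR_left_distrib distrib_right)
  qed
  have h3: "(c *\<^sub>R x, c*a) \<in> H0" if m1: "(x,a) \<in> H0" for x a c
  proof -
    obtain t where t: "x = t *\<^sub>R x0" "a = t * p x0" using m1 unfolding H0mem by blast
    show ?thesis unfolding H0mem using t by (auto intro!: exI[of _ "c*t"])
  qed
  have h4: "a \<le> p x" if m1: "(x,a) \<in> H0" for x a
  proof -
    obtain t where t: "x = t *\<^sub>R x0" "a = t * p x0" using m1 unfolding H0mem by blast
    show ?thesis using dom_neg t by simp
  qed
  have H0A: "H0 \<in> A" unfolding A_def using h1 h2 h3 h4 by simp
  have "\<forall>C\<in>chains A. \<exists>U\<in>A. \<forall>X\<in>C. X \<subseteq> U"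
  proof
    fix C assume C: "C \<in> chains A"
    show "\<exists>U\<in>A. \<forall>X\<in>C. X \<subseteq> U"
    proof (cases "C = {}")
      case True then show ?thesis using H0A by auto
    next
      case False
      have CA: "C \<subseteq> A" and ch: "\<And>X Y. X \<in> C \<Longrightarrow> Y \<in> C \<Longrightarrow> X \<subseteq> Y \<or> Y \<subseteq> X"
        using C unfolding chains_def chain_subset_def by auto
      have two: "\<exists>X\<in>C. P X" if "X1 \<in> C" "X2 \<in> C" "\<And>X. X \<in> C \<Longrightarrow> X1 \<subseteq> X \<Longrightarrow> X2 \<subseteq> X \<Longrightarrow> P X" for X1 X2 P
        using ch[OF that(1,2)] that by blast
      have XA: "X \<in> A" if "X \<in> C" for X using that CA by blast
      have Xfun: "a = b" if "X \<in> C" "(x,a) \<in> X" "(x,b) \<in> X" for X x a b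
        using XA[OF that(1)] that(2,3) unfolding A_def by blast
      have Xadd: "(x+y,a+b) \<in> X" if "X \<in> C" "(x,a) \<in> X" "(y,b) \<in> X" for X x a y b
        using XA[OF that(1)] that(2,3) unfolding A_def by blast
      have Xsc: "(c *\<^sub>R x, c*a) \<in> X" if "X \<in> C" "(x,a) \<in> X" for X x a c
        using XA[OF that(1)] that(2) unfolding A_def by blast
      have Xdom: "a \<le> p x" if "X \<in> C" "(x,a) \<in> X" for X x a
        using XA[OF that(1)] that(2) unfolding A_def by blast
      have XH0: "H0 \<subseteq> X" if "X \<in> C" for X
        using XA[OF that(1)] unfolding A_def by blast
      have u1: "H0 \<subseteq> \<Union>C" using False XH0 by blast
      have u2: "a = b" if m: "(x,a) \<in> \<Union>C" "(x,b) \<in> \<Union>C" for x a b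
      proof -
        obtain X1 X2 where X: "X1 \<in> C" "X2 \<in> C" "(x,a) \<in> X1" "(x,b) \<in> X2" using m by auto
        show ?thesis using ch[OF X(1,2)] X Xfun by blast
      qed
      have u3: "(x+y,a+b) \<in> \<Union>C" if m: "(x,a) \<in> \<Union>C" "(y,b) \<in> \<Union>C" for x a y b
      proof -
        obtain X1 X2 where X: "X1 \<in> C" "X2 \<in> C" "(x,a) \<in> X1" "(y,b) \<in> X2" using m by auto
        show ?thesis using ch[OF X(1,2)] X Xadd by blast
      qed
      have u4: "(c *\<^sub>R x, c*a) \<in> \<Union>C" if "(x,a) \<in> \<Union>C" for x a c
        using that Xsc by blast
      have u5: "a \<le> p x" if "(x,a) \<in> \<Union>C" for x a
        using that Xdom by blast
      have "\<Union>C \<in> A" unfolding A_def using u1 u2 u3 u4 u5 by simp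
      then show ?thesis by blast
    qed
  qed
  from Zorn_Lemma2[OF this] obtain M where MA: "M \<in> A" and Mmax: "\<And>X. X \<in> A \<Longrightarrow> M \<subseteq> X \<Longrightarrow> X = M"
    by blast
  have Mfun: "\<And>x a b. (x,a) \<in> M \<Longrightarrow> (x,b) \<in> M \<Longrightarrow> a = b"
    and Madd: "\<And>x a y b. (x,a) \<in> M \<Longrightarrow> (y,b) \<in> M \<Longrightarrow> (x+y,a+b) \<in> M"
    and Mscale: "\<And>x a c. (x,a) \<in> M \<Longrightarrow> (c *\<^sub>R x, c*a) \<in> M"
    and Mdom: "\<And>x a. (x,a) \<in> M \<Longrightarrow> a \<le> p x"
    and H0M: "H0 \<subseteq> M"
    using MA unfolding A_def by simp_all
  have M00: "(0,0) \<in> M"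
    using Mscale[of x0 "p x0" 0] H0M unfolding H0_def by force
  have total: "\<exists>a. (x1,a) \<in> M" for x1
  proof (rule ccontr)
    assume nx1: "\<not> (\<exists>a. (x1,a) \<in> M)"
    define L where "L = {b - p (z - x1) | z b. (z,b) \<in> M}"
    define U where "U = {p (z + x1) - b | z b. (z,b) \<in> M}"
    have LU: "l \<le> u" if m: "l \<in> L" "u \<in> U" for l u
    proof -
      obtain z b where zb: "(z,b) \<in> M" "l = b - p (z - x1)" using m(1) L_def by auto
      obtain z' b' where zb': "(z',b') \<in> M" "u = p (z' + x1) - b'" using m(2) U_def by auto
      have "b + b' \<le> p (z + z')" using Mdom[OF Madd[OF zb(1) zb'(1)]] .
      also have "\<dots> = p ((z - x1) + (z' + x1))" by (simp add: algebra_simps)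
      also have "\<dots> \<le> p (z - x1) + p (z' + x1)" by (rule sub)
      finally show ?thesis using zb zb' by simp
    qed
    have Lne: "L \<noteq> {}" using M00 L_def by auto
    have Une: "U \<noteq> {}" using M00 U_def by auto
    define c where "c = Sup L"
    have cL: "l \<le> c" if "l \<in> L" for l
      proof -
      obtain u0 where "u0 \<in> U" using Une by blast
      then have "bdd_above L" using LU unfolding bdd_above_def by blast
      then show ?thesis unfolding c_def using that by (rule cSup_upper[rotated])
    qed
    have cU: "c \<le> u" if "u \<in> U" for u
      unfolding c_def using that Lne LU by (intro cSup_least) auto
    define M' where "M' = {(x,a). \<exists>z b t. (z,b) \<in> M \<and> x = z + t *\<^sub>R x1 \<and> a = b + t * c}"
    have M'mem: "(x,a) \<in> M' \<longleftrightarrow> (\<exists>z b t. (z,b) \<in> M \<and> x = z + t *\<^sub>R x1 \<and> a = b + t * c)" for x a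
      unfolding M'_def by simp
    have MM': "M \<subseteq> M'"
    proof
      fix q assume q: "q \<in> M"
      obtain x a where "q = (x,a)" by fastforce
      moreover have "(x,a) \<in> M'" unfolding M'mem using q \<open>q = (x,a)\<close>
        by (intro exI[of _ x] exI[of _ a] exI[of _ "0::real"]) simp
      ultimately show "q \<in> M'" by simp
    qed
    have x1M': "(x1, c) \<in> M'" unfolding M'mem
      by (rule exI[of _ "0::'a"], rule exI[of _ "0::real"], rule exI[of _ "1::real"]) (simp add: M00)
    have "M' \<in> A"
      unfolding A_def
    proof (intro CollectI conjI allI impI)
      show "H0 \<subseteq> M'" using H0M MM' by blast
    next
      fix x a b assume m: "(x,a) \<in> M'" "(x,b) \<in> M'"
      obtain z1 b1 t1 where h1: "(z1,b1) \<in> M" "x = z1 + t1 *\<^sub>R x1" "a = b1 + t1 * c" using m(1) unfolding M'mem by blast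
      obtain z2 b2 t2 where h2: "(z2,b2) \<in> M" "x = z2 + t2 *\<^sub>R x1" "b = b2 + t2 * c" using m(2) unfolding M'mem by blast
      have h: "(z1,b1) \<in> M" "(z2,b2) \<in> M" "x = z1 + t1 *\<^sub>R x1" "a = b1 + t1 * c"
        "x = z2 + t2 *\<^sub>R x1" "b = b2 + t2 * c" using h1 h2 by auto
      have "t1 = t2"
      proof (rule ccontr)
        assume "t1 \<noteq> t2"
        have "(t1 - t2) *\<^sub>R x1 = z2 - z1" using h(3,5) by (simp add: algebra_simps)
        moreover have "(1/(t1-t2)) *\<^sub>R ((t1 - t2) *\<^sub>R x1) = x1" using \<open>t1 \<noteq> t2\<close> by simp
        ultimately have "x1 = (1/(t1-t2)) *\<^sub>R (z2 - z1)" by simp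
        moreover have "(z2 - z1, b2 - b1) \<in> M"
          using Madd[OF h(2) Mscale[OF h(1), of "-1"]] by simp
        ultimately have "(x1, (1/(t1-t2)) * (b2 - b1)) \<in> M" using Mscale[of "z2 - z1" "b2 - b1" "1/(t1-t2)"] by simp
        then show False using nx1 by blast
      qed
      then have "z1 = z2" using h by simp
      then have "b1 = b2" using Mfun h by blast
      then show "a = b" using h \<open>t1 = t2\<close> by simp
    next
      fix x a y b assume m: "(x,a) \<in> M'" "(y,b) \<in> M'"
      obtain z1 b1 t1 where h1: "(z1,b1) \<in> M" "x = z1 + t1 *\<^sub>R x1" "a = b1 + t1 * c" using m(1) unfolding M'mem by blast
      obtain z2 b2 t2 where h2: "(z2,b2) \<in> M" "y = z2 + t2 *\<^sub>R x1" "b = b2 + t2 * c" using m(2) unfolding M'mem by blast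
      have h: "(z1,b1) \<in> M" "(z2,b2) \<in> M" "x = z1 + t1 *\<^sub>R x1" "a = b1 + t1 * c"
        "y = z2 + t2 *\<^sub>R x1" "b = b2 + t2 * c" using h1 h2 by auto
      show "(x+y,a+b) \<in> M'" unfolding M'mem
        by (rule exI[of _ "z1+z2"], rule exI[of _ "b1+b2"], rule exI[of _ "t1+t2"])
          (use Madd[OF h(1,2)] h(3-6) in \<open>simp add: algebra_simps\<close>)
    next
      fix x a d assume "(x,a) \<in> M'"
      then obtain z1 b1 t1 where h: "(z1,b1) \<in> M" "x = z1 + t1 *\<^sub>R x1" "a = b1 + t1 * c"
        unfolding M'mem by blast
      show "(d *\<^sub>R x, d*a) \<in> M'" unfolding M'mem
        by (rule exI[of _ "d *\<^sub>R z1"], rule exI[of _ "d*b1"], rule exI[of _ "d*t1"])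
          (use Mscale[OF h(1), of d] h(2-3) in \<open>simp add: algebra_simps\<close>)
    next
      fix x a assume "(x,a) \<in> M'"
      then obtain z b t where h: "(z,b) \<in> M" "x = z + t *\<^sub>R x1" "a = b + t * c"
        unfolding M'mem by blast
      show "a \<le> p x"
      proof -
        consider "t = 0" | "t > 0" | "t < 0" by linarith
        then show ?thesis
        proof cases
          case 1 then show ?thesis using h Mdom by simp
        next
          case 2
          have m: "((1/t) *\<^sub>R z, (1/t) * b) \<in> M" using Mscale[OF h(1)] .
          have "c \<le> p ((1/t) *\<^sub>R z + x1) - (1/t) * b"
            using cU m unfolding U_def by blast
          then have "t * c \<le> t * p ((1/t) *\<^sub>R z + x1) - b"
            using 2 by (simp add: field_simps)
          also have "t * p ((1/t) *\<^sub>R z + x1) = p (t *\<^sub>R ((1/t) *\<^sub>R z + x1))" using hom[OF 2] by simp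
          also have "t *\<^sub>R ((1/t) *\<^sub>R z + x1) = x" using 2 h(2) by (simp add: algebra_simps)
          finally show ?thesis using h(3) by simp
        next
          case 3
          define s where "s = -t"
          have s: "s > 0" using 3 s_def by simp
          have m: "((1/s) *\<^sub>R z, (1/s) * b) \<in> M" using Mscale[OF h(1)] .
          have "(1/s) * b - p ((1/s) *\<^sub>R z - x1) \<le> c"
            using cL m unfolding L_def by blast
          then have "b - s * c \<le> s * p ((1/s) *\<^sub>R z - x1)"
            using s by (simp add: field_simps)
          also have "s * p ((1/s) *\<^sub>R z - x1) = p (s *\<^sub>R ((1/s) *\<^sub>R z - x1))" using hom[OF s] by simp
          also have "s *\<^sub>R ((1/s) *\<^sub>R z - x1) = x" using s h(2) s_def by (simp add: algebra_simps)
          finally show ?thesis using h(3) s_def by simp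
        qed
      qed
    qed
    then have "M' = M" using Mmax MM' by blast
    then show False using x1M' nx1 by blast
  qed
  define f where "f x = (THE a. (x,a) \<in> M)" for x
  have fM: "(x, f x) \<in> M" for x
    unfolding f_def using total[of x] Mfun by (metis theI)
  have feq: "f x = a" if "(x,a) \<in> M" for x a using Mfun[OF that fM] by simp
  have "linear f"
  proof (rule linearI)
    fix x y show "f (x + y) = f x + f y" using feq[OF Madd[OF fM fM]] .
  next
    fix r x show "f (r *\<^sub>R x) = r *\<^sub>R f x" using feq[OF Mscale[OF fM]] by simp
  qed
  moreover have "\<forall>x. f x \<le> p x" using Mdom fM by blast
  moreover have "f x0 = p x0"
  proof -
    have "(x0, p x0) \<in> H0" unfolding H0mem by (rule exI[of _ 1]) simp
    then show ?thesis using H0M feq by blast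
  qed
  ultimately show ?thesis by blast
qed



lemma tvs_cont_add: assumes "tvs_axioms TYPE('a::{real_vector,topological_space})"
  shows "continuous_on UNIV (\<lambda>y::'a. y + z)"
proof -
  have c: "continuous_on UNIV (\<lambda>(x::'a, y). x + y)" using assms unfolding tvs_axioms_def by blast
  have "continuous_on UNIV ((\<lambda>(x::'a, y). x + y) \<circ> (\<lambda>y. (y, z)))"
    by (rule continuous_on_compose) (auto intro!: continuous_intros continuous_on_subset[OF c])
  then show ?thesis by (simp add: o_def)
qed

lemma tvs_cont_scale: assumes "tvs_axioms TYPE('a::{real_vector,topological_space})"
  shows "continuous_on UNIV (\<lambda>y::'a. c *\<^sub>R y)"
proof -
  have s: "continuous_on UNIV (\<lambda>(c, x::'a). c *\<^sub>R x)" using assms unfolding tvs_axioms_def by blast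
  have "continuous_on UNIV ((\<lambda>(c, x::'a). c *\<^sub>R x) \<circ> (\<lambda>y. (c, y)))"
    by (rule continuous_on_compose) (auto intro!: continuous_intros continuous_on_subset[OF s])
  then show ?thesis by (simp add: o_def)
qed

lemma tvs_cont_scale_arg: assumes "tvs_axioms TYPE('a::{real_vector,topological_space})"
  shows "continuous_on UNIV (\<lambda>c::real. c *\<^sub>R (y::'a))"
proof -
  have s: "continuous_on UNIV (\<lambda>(c, x::'a). c *\<^sub>R x)" using assms unfolding tvs_axioms_def by blast
  have "continuous_on UNIV ((\<lambda>(c, x::'a). c *\<^sub>R x) \<circ> (\<lambda>c. (c, y)))"
    by (rule continuous_on_compose) (auto intro!: continuous_intros continuous_on_subset[OF s])
  then show ?thesis by (simp add: o_def)
qed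

lemma tvs_cont_affine: assumes "tvs_axioms TYPE('a::{real_vector,topological_space})"
  shows "continuous_on UNIV (\<lambda>y::'a. c *\<^sub>R (y - x))"
proof -
  have m: "continuous_on UNIV (\<lambda>y::'a. y - x)" using tvs_cont_add[OF assms, of "-x"] by simp
  have "continuous_on UNIV ((\<lambda>y::'a. c *\<^sub>R y) \<circ> (\<lambda>y. y - x))"
    by (rule continuous_on_compose[OF m]) (rule continuous_on_subset[OF tvs_cont_scale[OF assms]], simp)
  then show ?thesis by (simp add: o_def)
qed

lemma dual_separates:
  fixes x0 :: "'a::{real_vector,t2_space}"
  assumes tvs: "tvs_axioms TYPE('a)" and lc: "locally_convex_space TYPE('a)" and x0: "x0 \<noteq> 0"
  shows "\<exists>f\<in>continuous_dual. f x0 \<noteq> 0"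
proof -
  obtain U where U: "open U" "0 \<in> U" "x0 \<notin> U" using t1_space[of 0 x0] x0 by metis
  obtain W where W: "open W" "convex W" "0 \<in> W" "W \<subseteq> U"
    using lc U unfolding locally_convex_space_def by blast
  have x0W: "x0 \<notin> W" using W U by blast
  define T where "T x = {t::real. 0 < t \<and> inverse t *\<^sub>R x \<in> W}" for x
  define p where "p x = Inf (T x)" for x
  have star: "a *\<^sub>R w \<in> W" if "w \<in> W" "0 \<le> a" "a \<le> 1" for w a
    using convexD[OF W(2) that(1) W(3), of a "1 - a"] that by simp
  have Tne: "T x \<noteq> {}" for x
  proof -
    have "open ((\<lambda>c::real. c *\<^sub>R x) -` W)" by (rule open_vimage[OF W(1) tvs_cont_scale_arg[OF tvs]])
    moreover have "0 \<in> (\<lambda>c::real. c *\<^sub>R x) -` W" using W(3) by simp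
    ultimately obtain d where d: "d > 0" "ball 0 d \<subseteq> (\<lambda>c::real. c *\<^sub>R x) -` W"
      using open_contains_ball by blast
    have "d/2 \<in> ball 0 d" using d by simp
    then have "(d/2) *\<^sub>R x \<in> W" using d by blast
    then have "2/d \<in> T x" using d unfolding T_def by simp
    then show ?thesis by blast
  qed
  have Tbdd: "bdd_below (T x)" for x by (rule bdd_belowI[of _ 0]) (simp add: T_def)
  have p_nonneg: "0 \<le> p x" for x unfolding p_def using Tne by (rule cInf_greatest) (auto simp: T_def)
  have p_le: "p x \<le> t" if "t \<in> T x" for x t unfolding p_def using that Tbdd by (rule cInf_lower)
  have up: "s \<in> T x" if "t \<in> T x" "t \<le> s" for x t s
  proof -
    have t: "0 < t" "inverse t *\<^sub>R x \<in> W" using that(1) T_def by auto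
    have "(t/s) *\<^sub>R (inverse t *\<^sub>R x) \<in> W" by (rule star[OF t(2)]) (use t that(2) in \<open>auto simp: field_simps\<close>)
    moreover have "(t/s) *\<^sub>R (inverse t *\<^sub>R x) = inverse s *\<^sub>R x" using t by (simp add: field_simps)
    ultimately show ?thesis using t that unfolding T_def by auto
  qed
  have gt: "s \<in> T x" if ps: "p x < s" for x s
  proof -
    obtain t where "t \<in> T x" "t < s" using cInf_lessD[OF Tne ps[unfolded p_def]] by blast
    then show ?thesis using up by auto
  qed
  have sub: "p (x + y) \<le> p x + p y" for x y
  proof (rule field_le_epsilon)
    fix e :: real assume e: "0 < e"
    define s where "s = p x + e/2"
    define t where "t = p y + e/2"
    have sT: "s \<in> T x" using gt e s_def by simp
    have tT: "t \<in> T y" using gt e t_def by simp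
    have s0: "s > 0" using p_nonneg[of x] e s_def by simp
    have t0: "t > 0" using p_nonneg[of y] e t_def by simp
    have sW: "inverse s *\<^sub>R x \<in> W" and tW: "inverse t *\<^sub>R y \<in> W" using sT tT T_def by auto
    have "(s/(s+t)) *\<^sub>R (inverse s *\<^sub>R x) + (t/(s+t)) *\<^sub>R (inverse t *\<^sub>R y) \<in> W"
      using convexD[OF W(2) sW tW, of "s/(s+t)" "t/(s+t)"] s0 t0 by (simp add: add_divide_distrib[symmetric])
    moreover have "(s/(s+t)) *\<^sub>R (inverse s *\<^sub>R x) + (t/(s+t)) *\<^sub>R (inverse t *\<^sub>R y) = inverse (s+t) *\<^sub>R (x+y)"
      using s0 t0 by (simp add: field_simps scaleR_add_right)
    ultimately have "s + t \<in> T (x+y)" using s0 t0 unfolding T_def by simp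
    then have "p (x+y) \<le> s + t" by (rule p_le)
    then show "p (x+y) \<le> p x + p y + e" using s_def t_def by simp
  qed
  have hom_le: "p (c *\<^sub>R x) \<le> c * p x" if c: "c > 0" for c x
  proof (rule field_le_epsilon)
    fix e :: real assume e: "0 < e"
    define s where "s = p x + e/c"
    have sT: "s \<in> T x" using gt e c s_def by simp
    then have s0: "s > 0" and sW: "inverse s *\<^sub>R x \<in> W" using T_def by auto
    have cs: "inverse (c * s) * c = inverse s" using c s0 by (simp add: field_simps)
    have eq: "inverse (c * s) *\<^sub>R (c *\<^sub>R x) = inverse s *\<^sub>R x" by (simp only: scaleR_scaleR cs)
    have "inverse (c * s) *\<^sub>R (c *\<^sub>R x) \<in> W" unfolding eq by (rule sW)
    then have "c * s \<in> T (c *\<^sub>R x)" using s0 c unfolding T_def by (simp only: mem_Collect_eq) simp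
    then have "p (c *\<^sub>R x) \<le> c * s" by (rule p_le)
    moreover have "c * s = c * p x + e" using c s_def by (simp add: field_simps)
    ultimately show "p (c *\<^sub>R x) \<le> c * p x + e" by linarith
  qed
  have hom: "p (c *\<^sub>R x) = c * p x" if c: "c > 0" for c x
  proof -
    have "p x = p ((1/c) *\<^sub>R (c *\<^sub>R x))" using c by simp
    also have "\<dots> \<le> (1/c) * p (c *\<^sub>R x)" using hom_le[of "1/c" "c *\<^sub>R x"] c by simp
    finally have "c * p x \<le> p (c *\<^sub>R x)" using c by (simp add: field_simps)
    then show ?thesis using hom_le[OF c, of x] by linarith
  qed
  have pW: "p x \<le> 1" if "x \<in> W" for x
    using p_le[of 1 x] that unfolding T_def by simp
  have px0: "1 \<le> p x0"
  proof (rule ccontr)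
    assume "\<not> 1 \<le> p x0"
    then have "1 \<in> T x0" using gt by simp
    then show False using x0W unfolding T_def by simp
  qed
  obtain f where f: "linear f" "\<forall>x. f x \<le> p x" "f x0 = p x0"
    using hb_sublinear[of p x0, OF sub hom x0] by blast
  define Ob where "Ob = W \<inter> (\<lambda>y. (-1::real) *\<^sub>R (y - 0)) -` W"
  have O_open: "open Ob" unfolding Ob_def
    by (intro open_Int W(1) open_vimage[OF W(1) tvs_cont_affine[OF tvs]])
  have O0: "0 \<in> Ob" unfolding Ob_def using W(3) by simp
  have fO: "\<bar>f y\<bar> \<le> 1" if "y \<in> Ob" for y
  proof -
    have "y \<in> W" "- y \<in> W" using that unfolding Ob_def by auto
    then have "f y \<le> 1" "f (- y) \<le> 1" using f(2) pW by (metis order_trans)+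
    moreover have "f (- y) = - f y" using linear_neg[OF f(1)] by simp
    ultimately show ?thesis by simp
  qed
  have "continuous_on UNIV f"
    unfolding continuous_on_topological
  proof (intro ballI allI impI)
    fix x B assume B: "open B" "f x \<in> B"
    then obtain e where e: "e > 0" "ball (f x) e \<subseteq> B" using open_contains_ball by blast
    define r where "r = e/2"
    have r: "r > 0" using e r_def by simp
    define A where "A = (\<lambda>y. (1/r) *\<^sub>R (y - x)) -` Ob"
    have "open A" unfolding A_def by (rule open_vimage[OF O_open tvs_cont_affine[OF tvs]])
    moreover have "x \<in> A" unfolding A_def using O0 by simp
    moreover have "f y \<in> B" if "y \<in> A" for y
    proof -
      have yO: "(1/r) *\<^sub>R (y - x) \<in> Ob" using that A_def by simp
      have "f y - f x = f (y - x)" using linear_diff[OF f(1)] by simp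
      also have "y - x = r *\<^sub>R ((1/r) *\<^sub>R (y - x))" using r by simp
      also have "f \<dots> = r * f ((1/r) *\<^sub>R (y - x))" using linear_scale[OF f(1)] by simp
      finally have "\<bar>f y - f x\<bar> = r * \<bar>f ((1/r) *\<^sub>R (y - x))\<bar>" using r by (simp add: abs_mult)
      also have "\<dots> \<le> r" using fO[OF yO] r by (simp add: mult_le_cancel_left1)
      finally have "dist (f y) (f x) < e" using r_def e by (simp add: dist_real_def)
      then show ?thesis using e by (auto simp: dist_commute)
    qed
    ultimately show "\<exists>A. open A \<and> x \<in> A \<and> (\<forall>y\<in>UNIV. y \<in> A \<longrightarrow> f y \<in> B)" by blast
  qed
  then have "f \<in> continuous_dual" using f(1) unfolding continuous_dual_def by simp
  moreover have "f x0 \<noteq> 0" using f(3) px0 by simp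
  ultimately show ?thesis by blast
qed



definition snn :: "(real \<Rightarrow> real) \<Rightarrow> ('a::{real_vector,topological_space} \<Rightarrow> real) \<Rightarrow> bool" where
  "snn \<sigma> b \<longleftrightarrow> (\<exists>(r::nat) f \<theta> A. (\<forall>i<r. f i \<in> continuous_dual) \<and> b = (\<lambda>x. \<Sum>i<r. A i * \<sigma> (f i x - \<theta> i)))"

definition reps :: "(real \<Rightarrow> real) \<Rightarrow> ('a::{real_vector,topological_space} \<Rightarrow> real^'d \<Rightarrow> real) \<Rightarrow> bool" where
  "reps \<sigma> F \<longleftrightarrow> (\<exists>(N::nat) \<omega> \<zeta> b. (\<forall>k<N. snn \<sigma> (b k)) \<and> F = (\<lambda>u y. \<Sum>k<N. \<sigma> (\<omega> k \<bullet> y + \<zeta> k) * b k u))"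

definition repv :: "(real \<Rightarrow> real) \<Rightarrow> ('a::{real_vector,topological_space} \<Rightarrow> real^'d \<Rightarrow> real^'m) \<Rightarrow> bool" where
  "repv \<sigma> F \<longleftrightarrow> (\<exists>(N::nat) \<omega> \<zeta> a. (\<forall>k<N. topological_nn \<sigma> (a k)) \<and> F = (\<lambda>u y. \<Sum>k<N. \<sigma> (\<omega> k \<bullet> y + \<zeta> k) *\<^sub>R a k u))"

lemma sum_concat: "(\<Sum>k<(N1::nat)+N2. h k) = (\<Sum>k<N1. h k) + (\<Sum>k<N2. h (N1+k))"
  by (induct N2) (simp_all add: add.assoc)

lemma sum_if_concat:
  "(\<Sum>k<(M::nat)+L. if k < M then g k else h (k - M)) = (\<Sum>k<M. g k) + (\<Sum>k<L. h k)"
  by (simp add: sum_concat)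

lemma dual_zero: "(\<lambda>x. 0) \<in> continuous_dual"
  unfolding continuous_dual_def by (auto intro: linearI)

lemma dual_scale: "f \<in> continuous_dual \<Longrightarrow> (\<lambda>x. c * f x) \<in> continuous_dual"
  unfolding continuous_dual_def
  by (auto intro!: linearI continuous_intros simp: linear_add linear_scale algebra_simps)

lemma dual_add: "f \<in> continuous_dual \<Longrightarrow> g \<in> continuous_dual \<Longrightarrow> (\<lambda>x. f x + g x) \<in> continuous_dual"
  unfolding continuous_dual_def
  by (auto intro!: linearI continuous_intros simp: linear_add linear_scale algebra_simps)

lemma snn_zero: "snn \<sigma> (\<lambda>x. 0)"
  unfolding snn_def by (rule exI[of _ 0]) simp

lemma snn_scale: assumes "snn \<sigma> b" shows "snn \<sigma> (\<lambda>x. c * b x)"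
proof -
  obtain r :: nat and f \<theta> A where h: "\<forall>i<r. f i \<in> continuous_dual" "b = (\<lambda>x. \<Sum>i<r. A i * \<sigma> (f i x - \<theta> i))"
    using assms unfolding snn_def by blast
  show ?thesis unfolding snn_def
    by (rule exI[of _ r], rule exI[of _ f], rule exI[of _ \<theta>], rule exI[of _ "\<lambda>i. c * A i"])
       (use h in \<open>simp add: sum_distrib_left mult.assoc\<close>)
qed

lemma snn_add: assumes "snn \<sigma> b1" "snn \<sigma> b2" shows "snn \<sigma> (\<lambda>x. b1 x + b2 x)"
proof -
  obtain r1 :: nat and f1 \<theta>1 A1 where h1: "\<forall>i<r1. f1 i \<in> continuous_dual" "b1 = (\<lambda>x. \<Sum>i<r1. A1 i * \<sigma> (f1 i x - \<theta>1 i))"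
    using assms(1) unfolding snn_def by blast
  obtain r2 :: nat and f2 \<theta>2 A2 where h2: "\<forall>i<r2. f2 i \<in> continuous_dual" "b2 = (\<lambda>x. \<Sum>i<r2. A2 i * \<sigma> (f2 i x - \<theta>2 i))"
    using assms(2) unfolding snn_def by blast
  define f where "f i = (if i < r1 then f1 i else f2 (i - r1))" for i
  define \<theta> where "\<theta> i = (if i < r1 then \<theta>1 i else \<theta>2 (i - r1))" for i
  define A where "A i = (if i < r1 then A1 i else A2 (i - r1))" for i
  have "\<forall>i<r1+r2. f i \<in> continuous_dual" using h1(1) h2(1) unfolding f_def by auto
  moreover have "(\<lambda>x. b1 x + b2 x) = (\<lambda>x. \<Sum>i<r1+r2. A i * \<sigma> (f i x - \<theta> i))"
  proof
    fix x
    have "(\<Sum>i<r1+r2. A i * \<sigma> (f i x - \<theta> i)) =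
       (\<Sum>i<r1+r2. if i < r1 then A1 i * \<sigma> (f1 i x - \<theta>1 i) else A2 (i - r1) * \<sigma> (f2 (i - r1) x - \<theta>2 (i - r1)))"
      unfolding A_def f_def \<theta>_def by (rule sum.cong) auto
    then show "b1 x + b2 x = (\<Sum>i<r1+r2. A i * \<sigma> (f i x - \<theta> i))"
      using h1(2) h2(2) sum_if_concat[where M=r1 and L=r2 and g="\<lambda>i. A1 i * \<sigma> (f1 i x - \<theta>1 i)" and h="\<lambda>i. A2 i * \<sigma> (f2 i x - \<theta>2 i)"] by simp
  qed
  ultimately show ?thesis unfolding snn_def by blast
qed

lemma snn_basic: assumes "f \<in> continuous_dual"
  shows "snn \<sigma> (\<lambda>x. \<Sum>p<(n::nat). c p * \<sigma> (w p * f x - \<theta> p))"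
  unfolding snn_def
  by (rule exI[of _ n], rule exI[of _ "\<lambda>p x. w p * f x"], rule exI[of _ \<theta>], rule exI[of _ c])
     (use dual_scale[OF assms] in simp)

lemma reps_zero: "reps \<sigma> (\<lambda>u y. 0)"
  unfolding reps_def by (rule exI[of _ 0]) simp

lemma reps_scale: assumes "reps \<sigma> F" shows "reps \<sigma> (\<lambda>u y. c * F u y)"
proof -
  obtain N :: nat and \<omega> \<zeta> b where h: "\<forall>k<N. snn \<sigma> (b k)" "F = (\<lambda>u y. \<Sum>k<N. \<sigma> (\<omega> k \<bullet> y + \<zeta> k) * b k u)"
    using assms unfolding reps_def by blast
  show ?thesis unfolding reps_def
    by (rule exI[of _ N], rule exI[of _ \<omega>], rule exI[of _ \<zeta>], rule exI[of _ "\<lambda>k u. c * b k u"])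
       (use h snn_scale in \<open>auto simp add: sum_distrib_left mult_ac\<close>)
qed

lemma reps_add: assumes "reps \<sigma> F1" "reps \<sigma> F2" shows "reps \<sigma> (\<lambda>u y. F1 u y + F2 u y)"
proof -
  obtain N1 :: nat and \<omega>1 \<zeta>1 b1 where h1: "\<forall>k<N1. snn \<sigma> (b1 k)" "F1 = (\<lambda>u y. \<Sum>k<N1. \<sigma> (\<omega>1 k \<bullet> y + \<zeta>1 k) * b1 k u)"
    using assms(1) unfolding reps_def by blast
  obtain N2 :: nat and \<omega>2 \<zeta>2 b2 where h2: "\<forall>k<N2. snn \<sigma> (b2 k)" "F2 = (\<lambda>u y. \<Sum>k<N2. \<sigma> (\<omega>2 k \<bullet> y + \<zeta>2 k) * b2 k u)"
    using assms(2) unfolding reps_def by blast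
  define \<omega> where "\<omega> k = (if k < N1 then \<omega>1 k else \<omega>2 (k - N1))" for k
  define \<zeta> where "\<zeta> k = (if k < N1 then \<zeta>1 k else \<zeta>2 (k - N1))" for k
  define b where "b k = (if k < N1 then b1 k else b2 (k - N1))" for k
  have "\<forall>k<N1+N2. snn \<sigma> (b k)" using h1(1) h2(1) unfolding b_def by auto
  moreover have "(\<lambda>u y. F1 u y + F2 u y) = (\<lambda>u y. \<Sum>k<N1+N2. \<sigma> (\<omega> k \<bullet> y + \<zeta> k) * b k u)"
  proof (intro ext)
    fix u y
    have "(\<Sum>k<N1+N2. \<sigma> (\<omega> k \<bullet> y + \<zeta> k) * b k u) =
       (\<Sum>k<N1+N2. if k < N1 then \<sigma> (\<omega>1 k \<bullet> y + \<zeta>1 k) * b1 k u else \<sigma> (\<omega>2 (k - N1) \<bullet> y + \<zeta>2 (k - N1)) * b2 (k - N1) u)"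
      unfolding b_def \<omega>_def \<zeta>_def by (rule sum.cong) auto
    then show "F1 u y + F2 u y = (\<Sum>k<N1+N2. \<sigma> (\<omega> k \<bullet> y + \<zeta> k) * b k u)"
      using h1(2) h2(2) sum_if_concat[where M=N1 and L=N2 and g="\<lambda>k. \<sigma> (\<omega>1 k \<bullet> y + \<zeta>1 k) * b1 k u" and h="\<lambda>k. \<sigma> (\<omega>2 k \<bullet> y + \<zeta>2 k) * b2 k u"] by simp
  qed
  ultimately show ?thesis unfolding reps_def by blast
qed

lemma repv_add: assumes "repv \<sigma> F1" "repv \<sigma> F2" shows "repv \<sigma> (\<lambda>u y. F1 u y + F2 u y)"
proof -
  obtain N1 :: nat and \<omega>1 \<zeta>1 b1 where h1: "\<forall>k<N1. topological_nn \<sigma> (b1 k)" "F1 = (\<lambda>u y. \<Sum>k<N1. \<sigma> (\<omega>1 k \<bullet> y + \<zeta>1 k) *\<^sub>R b1 k u)"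
    using assms(1) unfolding repv_def by blast
  obtain N2 :: nat and \<omega>2 \<zeta>2 b2 where h2: "\<forall>k<N2. topological_nn \<sigma> (b2 k)" "F2 = (\<lambda>u y. \<Sum>k<N2. \<sigma> (\<omega>2 k \<bullet> y + \<zeta>2 k) *\<^sub>R b2 k u)"
    using assms(2) unfolding repv_def by blast
  define \<omega> where "\<omega> k = (if k < N1 then \<omega>1 k else \<omega>2 (k - N1))" for k
  define \<zeta> where "\<zeta> k = (if k < N1 then \<zeta>1 k else \<zeta>2 (k - N1))" for k
  define b where "b k = (if k < N1 then b1 k else b2 (k - N1))" for k
  have "\<forall>k<N1+N2. topological_nn \<sigma> (b k)" using h1(1) h2(1) unfolding b_def by auto
  moreover have "(\<lambda>u y. F1 u y + F2 u y) = (\<lambda>u y. \<Sum>k<N1+N2. \<sigma> (\<omega> k \<bullet> y + \<zeta> k) *\<^sub>R b k u)"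
  proof (intro ext)
    fix u y
    have "(\<Sum>k<N1+N2. \<sigma> (\<omega> k \<bullet> y + \<zeta> k) *\<^sub>R b k u) =
       (\<Sum>k<N1+N2. if k < N1 then \<sigma> (\<omega>1 k \<bullet> y + \<zeta>1 k) *\<^sub>R b1 k u else \<sigma> (\<omega>2 (k - N1) \<bullet> y + \<zeta>2 (k - N1)) *\<^sub>R b2 (k - N1) u)"
      unfolding b_def \<omega>_def \<zeta>_def by (rule sum.cong) auto
    then show "F1 u y + F2 u y = (\<Sum>k<N1+N2. \<sigma> (\<omega> k \<bullet> y + \<zeta> k) *\<^sub>R b k u)"
      using h1(2) h2(2) sum_if_concat[where M=N1 and L=N2 and g="\<lambda>k. \<sigma> (\<omega>1 k \<bullet> y + \<zeta>1 k) *\<^sub>R b1 k u" and h="\<lambda>k. \<sigma> (\<omega>2 k \<bullet> y + \<zeta>2 k) *\<^sub>R b2 k u"] by simp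
  qed
  ultimately show ?thesis unfolding repv_def by blast
qed

lemma repv_zero: "repv \<sigma> (\<lambda>u y. 0)"
  unfolding repv_def by (rule exI[of _ 0]) simp

lemma repv_sum: "finite J \<Longrightarrow> (\<And>j. j \<in> J \<Longrightarrow> repv \<sigma> (F j)) \<Longrightarrow> repv \<sigma> (\<lambda>u y. \<Sum>j\<in>J. F j u y)"
  by (induct J rule: finite_induct) (auto intro: repv_zero repv_add)

lemma snn_to_nn:
  fixes b :: "'a::{real_vector,topological_space} \<Rightarrow> real"
  assumes "snn \<sigma> b"
  shows "topological_nn \<sigma> (\<lambda>x. b x *\<^sub>R (axis j0 1 :: real^'m))"
proof -
  obtain r :: nat and f \<theta> A where h: "\<forall>i<r. f i \<in> continuous_dual" "b = (\<lambda>x. \<Sum>i<r. A i * \<sigma> (f i x - \<theta> i))"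
    using assms unfolding snn_def by blast
  define f' where "f' i = (if i < r then f i else (\<lambda>x. 0))" for i
  define A' where "A' j i = (if i < r \<and> j = j0 then A i else 0)" for j i
  have "Suc r \<ge> 1" by simp
  moreover have "\<forall>i<Suc r. f' i \<in> continuous_dual" using h(1) dual_zero unfolding f'_def by auto
  moreover have "(\<lambda>x. b x *\<^sub>R (axis j0 1 :: real^'m)) = (\<lambda>x. \<chi> j. \<Sum>i<Suc r. A' j i * \<sigma> (f' i x - \<theta> i))"
  proof (intro ext)
    fix x
    show "b x *\<^sub>R (axis j0 1 :: real^'m) = (\<chi> j. \<Sum>i<Suc r. A' j i * \<sigma> (f' i x - \<theta> i))"
    proof (subst vec_eq_iff, intro allI)
      fix j
      have "(\<Sum>i<Suc r. A' j i * \<sigma> (f' i x - \<theta> i)) = (\<Sum>i<r. A' j i * \<sigma> (f' i x - \<theta> i))"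
        by (simp add: A'_def)
      also have "\<dots> = (if j = j0 then b x else 0)"
        using h(2) by (auto simp: A'_def f'_def intro!: sum.cong)
      finally show "(b x *\<^sub>R (axis j0 1 :: real^'m)) $ j = (\<chi> j. \<Sum>i<Suc r. A' j i * \<sigma> (f' i x - \<theta> i)) $ j"
        by (simp add: axis_def)
    qed
  qed
  ultimately show ?thesis unfolding topological_nn_def by blast
qed

lemma reps_to_repv:
  assumes "reps \<sigma> F"
  shows "repv \<sigma> (\<lambda>u y. F u y *\<^sub>R (axis j0 1 :: real^'m))"
proof -
  obtain N :: nat and \<omega> \<zeta> b where h: "\<forall>k<N. snn \<sigma> (b k)" "F = (\<lambda>u y. \<Sum>k<N. \<sigma> (\<omega> k \<bullet> y + \<zeta> k) * b k u)"
    using assms unfolding reps_def by blast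
  show ?thesis unfolding repv_def
    by (rule exI[of _ N], rule exI[of _ \<omega>], rule exI[of _ \<zeta>], rule exI[of _ "\<lambda>k x. b k x *\<^sub>R (axis j0 1 :: real^'m)"])
       (use h snn_to_nn in \<open>auto simp add: scaleR_sum_left\<close>)
qed



definition approx :: "(real \<Rightarrow> real) \<Rightarrow> 'a set \<Rightarrow> (real^'d) set \<Rightarrow> ('a::{real_vector,topological_space} \<Rightarrow> real^'d \<Rightarrow> real) \<Rightarrow> bool" where
  "approx \<sigma> V K F \<longleftrightarrow> (\<forall>e>0. \<exists>R. reps \<sigma> R \<and> (\<forall>u\<in>V. \<forall>y\<in>K. \<bar>F u y - R u y\<bar> < e))"

lemma approx_limit:
  assumes "\<And>e. e > 0 \<Longrightarrow> \<exists>F'. approx \<sigma> V K F' \<and> (\<forall>u\<in>V. \<forall>y\<in>K. \<bar>F u y - F' u y\<bar> < e)"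
  shows "approx \<sigma> V K F"
  unfolding approx_def
proof (intro allI impI)
  fix e :: real assume e: "e > 0"
  obtain F' where F': "approx \<sigma> V K F'" "\<forall>u\<in>V. \<forall>y\<in>K. \<bar>F u y - F' u y\<bar> < e/2"
    using assms[of "e/2"] e by auto
  obtain R where R: "reps \<sigma> R" "\<forall>u\<in>V. \<forall>y\<in>K. \<bar>F' u y - R u y\<bar> < e/2"
    using F'(1) e unfolding approx_def by (meson half_gt_zero)
  have "\<forall>u\<in>V. \<forall>y\<in>K. \<bar>F u y - R u y\<bar> < e"
  proof (intro ballI)
    fix u y assume "u \<in> V" "y \<in> K"
    then have "\<bar>F u y - F' u y\<bar> < e/2" "\<bar>F' u y - R u y\<bar> < e/2" using F'(2) R(2) by auto
    then show "\<bar>F u y - R u y\<bar> < e" by linarith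
  qed
  then show "\<exists>R. reps \<sigma> R \<and> (\<forall>u\<in>V. \<forall>y\<in>K. \<bar>F u y - R u y\<bar> < e)" using R(1) by blast
qed

lemma approx_add:
  assumes "approx \<sigma> V K F1" "approx \<sigma> V K F2"
  shows "approx \<sigma> V K (\<lambda>u y. F1 u y + F2 u y)"
  unfolding approx_def
proof (intro allI impI)
  fix e :: real assume e: "e > 0"
  obtain R1 where R1: "reps \<sigma> R1" "\<forall>u\<in>V. \<forall>y\<in>K. \<bar>F1 u y - R1 u y\<bar> < e/2"
    using assms(1) e unfolding approx_def by (meson half_gt_zero)
  obtain R2 where R2: "reps \<sigma> R2" "\<forall>u\<in>V. \<forall>y\<in>K. \<bar>F2 u y - R2 u y\<bar> < e/2"
    using assms(2) e unfolding approx_def by (meson half_gt_zero)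
  have "\<forall>u\<in>V. \<forall>y\<in>K. \<bar>(F1 u y + F2 u y) - (R1 u y + R2 u y)\<bar> < e"
  proof (intro ballI)
    fix u y assume "u \<in> V" "y \<in> K"
    then have "\<bar>F1 u y - R1 u y\<bar> < e/2" "\<bar>F2 u y - R2 u y\<bar> < e/2" using R1(2) R2(2) by auto
    then show "\<bar>(F1 u y + F2 u y) - (R1 u y + R2 u y)\<bar> < e" by linarith
  qed
  then show "\<exists>R. reps \<sigma> R \<and> (\<forall>u\<in>V. \<forall>y\<in>K. \<bar>F1 u y + F2 u y - R u y\<bar> < e)"
    using reps_add[OF R1(1) R2(1)] by blast
qed

lemma approx_zero: "approx \<sigma> V K (\<lambda>u y. 0)"
  unfolding approx_def using reps_zero by fastforce

lemma approx_scale: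
  assumes "approx \<sigma> V K F"
  shows "approx \<sigma> V K (\<lambda>u y. c * F u y)"
proof (cases "c = 0")
  case True then show ?thesis using approx_zero by simp
next
  case False
  show ?thesis unfolding approx_def
  proof (intro allI impI)
    fix e :: real assume e: "e > 0"
    have "e / \<bar>c\<bar> > 0" using e False by simp
    then obtain R where R: "reps \<sigma> R" "\<forall>u\<in>V. \<forall>y\<in>K. \<bar>F u y - R u y\<bar> < e / \<bar>c\<bar>"
      using assms unfolding approx_def by blast
    have "\<forall>u\<in>V. \<forall>y\<in>K. \<bar>c * F u y - c * R u y\<bar> < e"
    proof (intro ballI)
      fix u y assume "u \<in> V" "y \<in> K"
      then have "\<bar>F u y - R u y\<bar> < e / \<bar>c\<bar>" using R(2) by auto
      then have "\<bar>c\<bar> * \<bar>F u y - R u y\<bar> < e" using False by (simp add: field_simps)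
      then show "\<bar>c * F u y - c * R u y\<bar> < e" by (simp add: abs_mult[symmetric] right_diff_distrib)
    qed
    then show "\<exists>R. reps \<sigma> R \<and> (\<forall>u\<in>V. \<forall>y\<in>K. \<bar>c * F u y - R u y\<bar> < e)"
      using reps_scale[OF R(1)] by blast
  qed
qed

lemma tw_1d:
  assumes tw: "tauber_wiener \<sigma>" and g: "continuous_on UNIV g" and e: "e > 0"
  shows "\<exists>(n::nat) c w \<theta>. \<forall>t. \<bar>t\<bar> \<le> B \<longrightarrow> \<bar>g t - (\<Sum>i<n. c i * \<sigma> (w i * t - \<theta> i))\<bar> < e"
proof -
  have "- \<bar>B\<bar> \<le> \<bar>B\<bar>" by simp
  moreover have "continuous_on {- \<bar>B\<bar>..\<bar>B\<bar>} g" using g by (rule continuous_on_subset) simp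
  ultimately obtain n :: nat and c w \<theta> where h: "\<forall>t\<in>{- \<bar>B\<bar>..\<bar>B\<bar>}. \<bar>g t - (\<Sum>i<n. c i * \<sigma> (w i * t - \<theta> i))\<bar> < e"
    using tw e unfolding tauber_wiener_def by blast
  show ?thesis
    by (rule exI[of _ n], rule exI[of _ c], rule exI[of _ w], rule exI[of _ \<theta>]) (use h in \<open>force simp: abs_le_iff\<close>)
qed

lemma prod_err:
  fixes a b p q d1 d2 e E1 E2 :: real
  assumes "\<bar>a - p\<bar> < d1" "\<bar>b - q\<bar> < d2" "\<bar>a\<bar> \<le> E1" "\<bar>b\<bar> \<le> E2" "e > 0" "E1 \<ge> 0" "E2 \<ge> 0"
    and d1: "d1 = e / (2 * (E2 + 1))" and d2: "d2 = e / (2 * (E1 + d1 + 1))"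
  shows "\<bar>a * b - p * q\<bar> < e"
proof -
  have d1p: "d1 > 0" using d1 assms by simp
  have d2p: "d2 > 0" using d2 d1p assms by simp
  have "a * b - p * q = (a - p) * b + p * (b - q)" by (simp add: algebra_simps)
  then have "\<bar>a * b - p * q\<bar> \<le> \<bar>a - p\<bar> * \<bar>b\<bar> + \<bar>p\<bar> * \<bar>b - q\<bar>"
    by (metis abs_mult abs_triangle_ineq)
  also have "\<bar>a - p\<bar> * \<bar>b\<bar> \<le> d1 * E2" using assms by (intro mult_mono) auto
  also have "\<bar>p\<bar> * \<bar>b - q\<bar> \<le> (E1 + d1) * d2"
  proof (intro mult_mono)
    show "\<bar>p\<bar> \<le> E1 + d1" using assms by linarith
  qed (use assms d1p in auto)
  also have "d1 * E2 < e / 2"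
  proof -
    have "d1 * E2 = (e/2) * (E2 / (E2 + 1))" using d1 by (simp add: field_simps)
    also have "\<dots> < (e/2) * 1" using assms by (intro mult_strict_left_mono) auto
    finally show ?thesis by simp
  qed
  also have "(E1 + d1) * d2 < e / 2"
  proof -
    have "(E1 + d1) * d2 = (e/2) * ((E1 + d1) / (E1 + d1 + 1))" using d2 d1p assms by (simp add: field_simps)
    also have "\<dots> < (e/2) * 1" using assms d1p by (intro mult_strict_left_mono) auto
    finally show ?thesis by simp
  qed
  finally show ?thesis by simp
qed

lemma bound_on_compact:
  fixes h :: "'b::topological_space \<Rightarrow> real"
  assumes "compact S" "continuous_on S h"
  shows "\<exists>B. \<forall>x\<in>S. \<bar>h x\<bar> \<le> B"
proof -
  have "compact (h ` S)" using assms compact_continuous_image by blast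
  then have "bounded (h ` S)" by (rule compact_imp_bounded)
  then show ?thesis unfolding bounded_real by auto
qed

lemma approx_basic:
  fixes V :: "'a::{real_vector,topological_space} set" and K :: "(real^'d) set"
  assumes tw: "tauber_wiener \<sigma>" and V: "compact V" and K: "compact K" and f: "f \<in> continuous_dual"
  shows "approx \<sigma> V K (\<lambda>u y. exp (f u) * exp (\<omega> \<bullet> y))"
  unfolding approx_def
proof (intro allI impI)
  fix e :: real assume e: "e > 0"
  have fc: "continuous_on V f" using f unfolding continuous_dual_def by (auto intro: continuous_on_subset)
  obtain Bf where Bf: "\<forall>u\<in>V. \<bar>f u\<bar> \<le> Bf" using bound_on_compact[OF V fc] by blast
  have wc: "continuous_on K (\<lambda>y. \<omega> \<bullet> y)" by (intro continuous_intros)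
  obtain Bw where Bw: "\<forall>y\<in>K. \<bar>\<omega> \<bullet> y\<bar> \<le> Bw" using bound_on_compact[OF K wc] by blast
  define E1 where "E1 = exp Bf"
  define E2 where "E2 = exp Bw"
  have E1: "\<forall>u\<in>V. \<bar>exp (f u)\<bar> \<le> E1" using Bf unfolding E1_def by auto
  have E2: "\<forall>y\<in>K. \<bar>exp (\<omega> \<bullet> y)\<bar> \<le> E2" using Bw unfolding E2_def by auto
  have E1p: "E1 \<ge> 0" "E2 \<ge> 0" unfolding E1_def E2_def by auto
  define d1 where "d1 = e / (2 * (E2 + 1))"
  define d2 where "d2 = e / (2 * (E1 + d1 + 1))"
  have d1p: "d1 > 0" using e E1p d1_def by simp
  have d2p: "d2 > 0" using e E1p d1p d2_def by simp
  have ec: "continuous_on UNIV (\<lambda>t::real. exp t)" by (intro continuous_intros)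
  obtain n1 :: nat and c1 w1 \<theta>1 where P: "\<forall>t. \<bar>t\<bar> \<le> Bf \<longrightarrow> \<bar>exp t - (\<Sum>i<n1. c1 i * \<sigma> (w1 i * t - \<theta>1 i))\<bar> < d1"
    using tw_1d[OF tw ec d1p] by blast
  obtain n2 :: nat and c2 w2 \<theta>2 where Q: "\<forall>t. \<bar>t\<bar> \<le> Bw \<longrightarrow> \<bar>exp t - (\<Sum>i<n2. c2 i * \<sigma> (w2 i * t - \<theta>2 i))\<bar> < d2"
    using tw_1d[OF tw ec d2p] by blast
  define P where "P u = (\<Sum>i<n1. c1 i * \<sigma> (w1 i * f u - \<theta>1 i))" for u
  define Q where "Q t = (\<Sum>i<n2. c2 i * \<sigma> (w2 i * t - \<theta>2 i))" for t
  define R where "R u y = (\<Sum>l<n2. \<sigma> ((w2 l *\<^sub>R \<omega>) \<bullet> y + (- \<theta>2 l)) * (c2 l * P u))" for u y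
  have snnP: "snn \<sigma> P" unfolding P_def by (rule snn_basic[OF f])
  have "reps \<sigma> R" unfolding reps_def R_def
    by (rule exI[of _ n2], rule exI[of _ "\<lambda>l. w2 l *\<^sub>R \<omega>"], rule exI[of _ "\<lambda>l. - \<theta>2 l"],
        rule exI[of _ "\<lambda>l u. c2 l * P u"]) (use snn_scale[OF snnP] in auto)
  moreover have "R u y = P u * Q (\<omega> \<bullet> y)" for u y
    unfolding R_def Q_def by (simp add: sum_distrib_left mult_ac)
  moreover have "\<bar>exp (f u) * exp (\<omega> \<bullet> y) - P u * Q (\<omega> \<bullet> y)\<bar> < e" if "u \<in> V" "y \<in> K" for u y
    by (rule prod_err[OF _ _ _ _ e E1p d1_def d2_def])
       (use that P Q Bf Bw E1 E2 in \<open>auto simp: P_def Q_def\<close>)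
  ultimately show "\<exists>R. reps \<sigma> R \<and> (\<forall>u\<in>V. \<forall>y\<in>K. \<bar>exp (f u) * exp (\<omega> \<bullet> y) - R u y\<bar> < e)"
    by metis
qed



inductive expspan :: "('a::{real_vector,topological_space} \<times> (real^'d) \<Rightarrow> real) \<Rightarrow> bool" where
  basic: "f \<in> continuous_dual \<Longrightarrow> expspan (\<lambda>z. c * exp (f (fst z)) * exp (\<omega> \<bullet> snd z))"
| add: "expspan h1 \<Longrightarrow> expspan h2 \<Longrightarrow> expspan (\<lambda>z. h1 z + h2 z)"

lemma expspan_cont: "expspan h \<Longrightarrow> continuous_on UNIV h"
proof (induction rule: expspan.induct)
  case (basic f c \<omega>)
  have "continuous_on UNIV f" using basic unfolding continuous_dual_def by simp
  then have fc: "continuous_on UNIV (\<lambda>z::'a \<times> (real^'d). f (fst z))"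
    by (rule continuous_on_compose2) (auto intro: continuous_intros)
  show ?case by (intro continuous_intros fc)
next
  case (add h1 h2) then show ?case by (intro continuous_intros)
qed

lemma expspan_const: "expspan (\<lambda>z::'a::{real_vector,topological_space} \<times> (real^'d). c)"
proof -
  have "expspan (\<lambda>z::'a \<times> (real^'d). c * exp ((\<lambda>x. 0) (fst z)) * exp (0 \<bullet> snd z))"
    by (rule basic[OF dual_zero])
  then show ?thesis by simp
qed

lemma expspan_mult_basic:
  assumes "expspan h2" and f1: "f1 \<in> continuous_dual"
  shows "expspan (\<lambda>z. (c1 * exp (f1 (fst z)) * exp (\<omega>1 \<bullet> snd z)) * h2 z)"
  using assms(1)
proof (induction rule: expspan.induct)
  case (basic f c \<omega>)
  have "expspan (\<lambda>z. (c1 * c) * exp ((\<lambda>x. f1 x + f x) (fst z)) * exp ((\<omega>1 + \<omega>) \<bullet> snd z))"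
    by (rule expspan.basic[OF dual_add[OF f1 basic]])
  moreover have "(\<lambda>z. (c1 * c) * exp ((\<lambda>x. f1 x + f x) (fst z)) * exp ((\<omega>1 + \<omega>) \<bullet> snd z)) =
      (\<lambda>z. (c1 * exp (f1 (fst z)) * exp (\<omega>1 \<bullet> snd z)) * (c * exp (f (fst z)) * exp (\<omega> \<bullet> snd z)))"
    by (simp add: exp_add inner_add_left mult_ac)
  ultimately show ?case by simp
next
  case (add h1 h2)
  then show ?case using expspan.add[OF add.IH] by (simp add: distrib_left)
qed

lemma expspan_mult: "expspan h1 \<Longrightarrow> expspan h2 \<Longrightarrow> expspan (\<lambda>z. h1 z * h2 z)"
proof (induction h1 rule: expspan.induct)
  case (basic f c \<omega>) show ?case by (rule expspan_mult_basic[OF basic.prems basic.hyps])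
next
  case (add h1 h3)
  then show ?case using expspan.add[OF add.IH] by (simp add: distrib_right)
qed

lemma expspan_approx:
  fixes V :: "'a::{real_vector,topological_space} set" and K :: "(real^'d) set"
  assumes tw: "tauber_wiener \<sigma>" and V: "compact V" and K: "compact K"
  shows "expspan h \<Longrightarrow> approx \<sigma> V K (\<lambda>u y. h (u, y))"
proof (induction rule: expspan.induct)
  case (basic f c \<omega>)
  from approx_scale[OF approx_basic[OF tw V K basic], of c]
  show ?case by (simp add: mult_ac)
next
  case (add h1 h2) show ?case by (rule approx_add[OF add.IH])
qed

lemma cont_approx:
  fixes V :: "'a::{real_vector,t2_space} set" and K :: "(real^'d) set"
  assumes tvs: "tvs_axioms TYPE('a)" and lc: "locally_convex_space TYPE('a)"
    and tw: "tauber_wiener \<sigma>" and V: "compact V" and K: "compact K"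
    and g: "continuous_on (V \<times> K) g"
  shows "approx \<sigma> V K (\<lambda>u y. g (u, y))"
proof (rule approx_limit)
  fix e :: real assume e: "e > 0"
  have sep: "\<exists>h. expspan h \<and> h x \<noteq> h y" if "x \<in> V \<times> K \<and> y \<in> V \<times> K \<and> x \<noteq> y" for x y :: "'a \<times> (real^'d)"
  proof (cases "fst x = fst y")
    case False
    then have "fst x - fst y \<noteq> 0" by simp
    then obtain f where f: "f \<in> continuous_dual" "f (fst x - fst y) \<noteq> 0"
      using dual_separates[OF tvs lc] by blast
    have "linear f" using f(1) unfolding continuous_dual_def by simp
    then have "f (fst x - fst y) = f (fst x) - f (fst y)" by (rule linear_diff)
    then have "f (fst x) \<noteq> f (fst y)" using f(2) by simp
    then have ne: "1 * exp (f (fst x)) * exp (0 \<bullet> snd x) \<noteq> 1 * exp (f (fst y)) * exp (0 \<bullet> snd y)" by simp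
    have "expspan (\<lambda>z::'a \<times> (real^'d). 1 * exp (f (fst z)) * exp (0 \<bullet> snd z))" by (rule basic[OF f(1)])
    then show ?thesis using ne by blast
  next
    case True
    have ne: "snd x \<noteq> snd y"
    proof
      assume "snd x = snd y"
      then have "x = y" using True by (simp add: prod_eq_iff)
      then show False using that by simp
    qed
    define w where "w = snd x - snd y"
    have "w \<bullet> snd x - w \<bullet> snd y = w \<bullet> w" unfolding w_def by (simp add: inner_diff_right)
    moreover have "w \<bullet> w > 0" using ne w_def by simp
    ultimately have "w \<bullet> snd x \<noteq> w \<bullet> snd y" by linarith
    then have ne2: "1 * exp ((\<lambda>x. 0) (fst x)) * exp (w \<bullet> snd x) \<noteq> 1 * exp ((\<lambda>x::'a. 0::real) (fst y)) * exp (w \<bullet> snd y)" by simp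
    have "expspan (\<lambda>z::'a \<times> (real^'d). 1 * exp ((\<lambda>x. 0) (fst z)) * exp (w \<bullet> snd z))" by (rule basic[OF dual_zero])
    then show ?thesis using ne2 by blast
  qed
  have c': "continuous_on (V \<times> K) f" if "expspan f" for f :: "'a \<times> (real^'d) \<Rightarrow> real"
    by (rule continuous_on_subset[OF expspan_cont[OF that]]) simp
  have a': "expspan (\<lambda>x. f x + g x)" if "expspan f \<and> expspan g" for f g :: "'a \<times> (real^'d) \<Rightarrow> real"
    using that by (auto intro: expspan.add)
  have m': "expspan (\<lambda>x. f x * g x)" if "expspan f \<and> expspan g" for f g :: "'a \<times> (real^'d) \<Rightarrow> real"
    using that by (auto intro: expspan_mult)
  obtain h where h: "expspan h" "\<forall>x\<in>V \<times> K. \<bar>g x - h x\<bar> < e"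
    using Stone_Weierstrass_HOL[OF compact_Times[OF V K] expspan_const c' a' m' sep g e] by blast
  show "\<exists>F'. approx \<sigma> V K F' \<and> (\<forall>u\<in>V. \<forall>y\<in>K. \<bar>g (u, y) - F' u y\<bar> < e)"
    using expspan_approx[OF tw V K h(1)] h(2) by (intro exI[of _ "\<lambda>u y. h (u, y)"]) auto
qed



lemma basis_exp_R: "(\<Sum>j\<in>UNIV. (x $ j) *\<^sub>R axis j 1) = (x::real^'m)"
  using basis_expansion[of x] by (simp add: scalar_mult_eq_scaleR)

context
  fixes nrm :: "real^'m \<Rightarrow> real"
  assumes nrm: "is_norm nrm"
begin

lemma nrm_scale: "nrm (c *\<^sub>R x) = \<bar>c\<bar> * nrm x" using nrm unfolding is_norm_def by blast
lemma nrm_tri: "nrm (x + y) \<le> nrm x + nrm y" using nrm unfolding is_norm_def by blast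
lemma nrm_nonneg: "0 \<le> nrm x" using nrm unfolding is_norm_def by blast
lemma nrm_pos: "x \<noteq> 0 \<Longrightarrow> 0 < nrm x" using nrm unfolding is_norm_def by (metis order_le_less)
lemma nrm_zero: "nrm 0 = 0" using nrm_scale[of 0 0] by simp
lemma nrm_minus: "nrm (- x) = nrm x" using nrm_scale[of "-1" x] by simp

lemma nrm_sum: "finite J \<Longrightarrow> nrm (\<Sum>j\<in>J. v j) \<le> (\<Sum>j\<in>J. nrm (v j))"
proof (induct J rule: finite_induct)
  case empty then show ?case by (simp add: nrm_zero)
next
  case (insert j J)
  then show ?case using nrm_tri[of "v j" "sum v J"] by simp
qed

definition nS :: real where "nS = (\<Sum>j\<in>UNIV. nrm (axis j (1::real) :: real^'m))"

lemma nS_nonneg: "0 \<le> nS" unfolding nS_def by (intro sum_nonneg nrm_nonneg)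

lemma nrm_comb: assumes "\<And>j. \<bar>d j\<bar> \<le> D"
  shows "nrm (\<Sum>j\<in>UNIV. d j *\<^sub>R (axis j 1 :: real^'m)) \<le> D * nS"
proof -
  have "nrm (\<Sum>j\<in>UNIV. d j *\<^sub>R (axis j 1 :: real^'m)) \<le> (\<Sum>j\<in>UNIV. nrm (d j *\<^sub>R (axis j 1 :: real^'m)))"
    by (rule nrm_sum) simp
  also have "\<dots> = (\<Sum>j\<in>UNIV. \<bar>d j\<bar> * nrm (axis j 1 :: real^'m))" by (simp add: nrm_scale)
  also have "\<dots> \<le> (\<Sum>j\<in>UNIV. D * nrm (axis j 1 :: real^'m))"
    by (intro sum_mono mult_right_mono assms nrm_nonneg)
  also have "\<dots> = D * nS" unfolding nS_def by (simp add: sum_distrib_left)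
  finally show ?thesis .
qed

lemma nrm_upper: "nrm x \<le> norm x * nS"
proof -
  have "nrm x = nrm (\<Sum>j\<in>UNIV. (x $ j) *\<^sub>R (axis j 1 :: real^'m))" using basis_exp_R[of x] by simp
  also have "\<dots> \<le> norm x * nS" by (rule nrm_comb) (rule component_le_norm_cart)
  finally show ?thesis .
qed

lemma nrm_cont: "continuous_on UNIV nrm"
  unfolding continuous_on_iff
proof (intro ballI allI impI)
  fix x :: "real^'m" and e :: real assume e: "e > 0"
  define d where "d = e / (nS + 1)"
  have d: "d > 0" using e nS_nonneg d_def by simp
  have "dist (nrm y) (nrm x) < e" if "dist y x < d" for y
  proof -
    have "nrm y \<le> nrm x + nrm (y - x)" using nrm_tri[of x "y - x"] by simp
    moreover have "nrm x \<le> nrm y + nrm (x - y)" using nrm_tri[of y "x - y"] by simp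
    moreover have "nrm (x - y) = nrm (y - x)" using nrm_minus[of "y - x"] by simp
    ultimately have "\<bar>nrm y - nrm x\<bar> \<le> nrm (y - x)" by linarith
    also have "\<dots> \<le> norm (y - x) * nS" by (rule nrm_upper)
    also have "\<dots> \<le> d * nS" using that nS_nonneg by (intro mult_right_mono) (auto simp: dist_norm)
    also have "\<dots> < e" using e nS_nonneg unfolding d_def by (simp add: field_simps)
    finally show ?thesis by (simp add: dist_real_def)
  qed
  then show "\<exists>d>0. \<forall>y\<in>UNIV. dist y x < d \<longrightarrow> dist (nrm y) (nrm x) < e" using d by blast
qed

lemma nrm_lower: "\<exists>Cl>0. \<forall>x. norm x \<le> Cl * nrm x"
proof -
  obtain j0 :: 'm where True by simp
  have ne: "sphere (0::real^'m) 1 \<noteq> {}" using norm_axis_1[of j0] by (auto intro!: exI[of _ "axis j0 1"])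
  obtain xm where xm: "xm \<in> sphere (0::real^'m) 1" "\<forall>y\<in>sphere 0 1. nrm xm \<le> nrm y"
    using continuous_attains_inf[OF compact_sphere ne continuous_on_subset[OF nrm_cont]] by blast
  have "xm \<noteq> 0" using xm(1) by auto
  then have m: "nrm xm > 0" by (rule nrm_pos)
  have "norm x \<le> (1 / nrm xm) * nrm x" for x
  proof (cases "x = 0")
    case True then show ?thesis by (simp add: nrm_zero)
  next
    case False
    then have "(1 / norm x) *\<^sub>R x \<in> sphere 0 1" by simp
    then have "nrm xm \<le> nrm ((1 / norm x) *\<^sub>R x)" using xm(2) by blast
    also have "\<dots> = nrm x / norm x" by (simp add: nrm_scale)
    finally have "nrm xm * norm x \<le> nrm x" using False by (simp add: field_simps)
    then show ?thesis using m by (simp add: field_simps)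
  qed
  moreover have "1 / nrm xm > 0" using m by simp
  ultimately show ?thesis by blast
qed

end

lemma G_comp_cont:
  fixes V :: "'a::{real_vector,t2_space} set" and K :: "(real ^ 'd) set"
    and G :: "'a \<Rightarrow> real ^ 'd \<Rightarrow> real ^ 'm" and nrm :: "real ^ 'm \<Rightarrow> real"
  assumes nrm: "is_norm nrm"
    and G_cont_K: "\<forall>u\<in>V. continuous_on K (G u)"
    and G_cont: "\<forall>u\<in>V. \<forall>e>0. \<exists>U. open U \<and> u \<in> U \<and> (\<forall>v\<in>V \<inter> U. \<forall>y\<in>K. nrm (G v y - G u y) < e)"
  shows "continuous_on (V \<times> K) (\<lambda>z. G (fst z) (snd z) $ j)"
  unfolding continuous_on_topological
proof (intro ballI allI impI)
  fix z B assume z: "z \<in> V \<times> K" and B: "open B" "G (fst z) (snd z) $ j \<in> B"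
  obtain u0 y0 where z0: "z = (u0, y0)" "u0 \<in> V" "y0 \<in> K" using z by auto
  obtain e where e: "e > 0" "ball (G u0 y0 $ j) e \<subseteq> B" using B z0 open_contains_ball by force
  obtain Cl where Cl: "Cl > 0" "\<forall>x. norm x \<le> Cl * nrm x" using nrm_lower[OF nrm] by blast
  have "e / (2 * Cl) > 0" using e Cl by simp
  then obtain U where U: "open U" "u0 \<in> U" "\<forall>v\<in>V \<inter> U. \<forall>y\<in>K. nrm (G v y - G u0 y) < e / (2 * Cl)"
    using G_cont z0 by blast
  have "e/2 > 0" using e by simp
  then obtain d where d: "d > 0" "\<forall>y\<in>K. dist y y0 < d \<longrightarrow> dist (G u0 y) (G u0 y0) < e/2"
    using G_cont_K z0 unfolding continuous_on_iff by blast
  define A where "A = U \<times> ball y0 d"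
  have "open A" unfolding A_def using U(1) by (intro open_Times) auto
  moreover have "z \<in> A" unfolding A_def using z0 U d by simp
  moreover have "G (fst w) (snd w) $ j \<in> B" if w: "w \<in> V \<times> K" "w \<in> A" for w
  proof -
    obtain v y where vy: "w = (v, y)" "v \<in> V" "y \<in> K" "v \<in> U" "dist y y0 < d"
      using w unfolding A_def by (auto simp: dist_commute)
    have "\<bar>(G v y - G u0 y) $ j\<bar> \<le> norm (G v y - G u0 y)" by (rule component_le_norm_cart)
    also have "\<dots> \<le> Cl * nrm (G v y - G u0 y)" using Cl by blast
    also have "\<dots> < Cl * (e / (2 * Cl))" using U(3) vy Cl by (intro mult_strict_left_mono) auto
    also have "\<dots> = e/2" using Cl by simp
    finally have 1: "\<bar>G v y $ j - G u0 y $ j\<bar> < e/2" by simp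
    have "\<bar>(G u0 y - G u0 y0) $ j\<bar> \<le> norm (G u0 y - G u0 y0)" by (rule component_le_norm_cart)
    also have "\<dots> < e/2" using d vy by (simp add: dist_norm)
    finally have 2: "\<bar>G u0 y $ j - G u0 y0 $ j\<bar> < e/2" by simp
    have "\<bar>G v y $ j - G u0 y0 $ j\<bar> < e" using 1 2 by linarith
    then have "dist (G v y $ j) (G u0 y0 $ j) < e" by (simp add: dist_real_def)
    then show ?thesis using e vy by (auto simp: dist_commute)
  qed
  ultimately show "\<exists>A. open A \<and> z \<in> A \<and> (\<forall>y\<in>V \<times> K. y \<in> A \<longrightarrow> G (fst y) (snd y) $ j \<in> B)" by blast
qed



lemma nn_zero: "topological_nn \<sigma> (\<lambda>x::'a::{real_vector,topological_space}. 0 :: real^'m)"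
  unfolding topological_nn_def
  by (rule exI[of _ 1], rule exI[of _ "\<lambda>i x. 0"], rule exI[of _ "\<lambda>i. 0"], rule exI[of _ "\<lambda>j i. 0"])
     (simp add: dual_zero vec_eq_iff fun_eq_iff)

lemma repv_pad:
  fixes F :: "'a::{real_vector,topological_space} \<Rightarrow> real ^ 'd \<Rightarrow> real ^ 'm"
  assumes "repv \<sigma> F"
  shows "\<exists>(N::nat) (\<omega>::nat \<Rightarrow> real ^ 'd) (\<zeta>::nat \<Rightarrow> real) (a::nat \<Rightarrow> 'a \<Rightarrow> real ^ 'm).
           N \<ge> 1 \<and> (\<forall>k<N. topological_nn \<sigma> (a k)) \<and> (\<forall>u y. F u y = (\<Sum>k<N. \<sigma> (\<omega> k \<bullet> y + \<zeta> k) *\<^sub>R a k u))"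
proof -
  obtain N :: nat and \<omega> \<zeta> a where h: "\<forall>k<N. topological_nn \<sigma> (a k)"
    "F = (\<lambda>u y. \<Sum>k<N. \<sigma> (\<omega> k \<bullet> y + \<zeta> k) *\<^sub>R a k u)"
    using assms unfolding repv_def by blast
  define a' where "a' k = (if k < N then a k else (\<lambda>x. 0))" for k
  have "\<forall>k<Suc N. topological_nn \<sigma> (a' k)" using h(1) nn_zero unfolding a'_def by auto
  moreover have "F u y = (\<Sum>k<Suc N. \<sigma> (\<omega> k \<bullet> y + \<zeta> k) *\<^sub>R a' k u)" for u y
    using h(2) unfolding a'_def by (auto intro!: sum.cong)
  ultimately show ?thesis by (intro exI[of _ "Suc N"] exI[of _ \<omega>] exI[of _ \<zeta>] exI[of _ a']) auto
qed

theorem mainTheorem2: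
  fixes V :: "'a::{real_vector,t2_space} set"
    and K :: "(real ^ 'd) set"
    and G :: "'a \<Rightarrow> real ^ 'd \<Rightarrow> real ^ 'm"
    and nrm :: "real ^ 'm \<Rightarrow> real"
    and \<sigma> :: "real \<Rightarrow> real"
    and \<epsilon> :: real
  assumes tvs: "tvs_axioms TYPE('a)"
    and lc: "locally_convex_space TYPE('a)"
    and V: "compact V"
    and K: "compact K"
    and nrm: "is_norm nrm"
    and G_cont_K: "\<forall>u\<in>V. continuous_on K (G u)"
    and G_cont: "\<forall>u\<in>V. \<forall>e>0. \<exists>U. open U \<and> u \<in> U \<and>
                   (\<forall>v\<in>V \<inter> U. \<forall>y\<in>K. nrm (G v y - G u y) < e)"
    and \<sigma>_cont: "continuous_on UNIV \<sigma>"
    and \<sigma>_TW: "tauber_wiener \<sigma>"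
    and \<epsilon>: "\<epsilon> > 0"
  shows "\<exists>(N::nat) (\<omega>::nat \<Rightarrow> real ^ 'd) (\<zeta>::nat \<Rightarrow> real) (a::nat \<Rightarrow> 'a \<Rightarrow> real ^ 'm).
           N \<ge> 1 \<and> (\<forall>k<N. topological_nn \<sigma> (a k)) \<and>
           (\<exists>c<\<epsilon>. \<forall>u\<in>V. \<forall>y\<in>K.
              nrm (G u y - (\<Sum>k<N. \<sigma> (\<omega> k \<bullet> y + \<zeta> k) *\<^sub>R a k u)) \<le> c)"
proof -
  have Gj: "approx \<sigma> V K (\<lambda>u y. G u y $ j)" for j
    using cont_approx[OF tvs lc \<sigma>_TW V K G_comp_cont[OF nrm G_cont_K G_cont, of j]] by simp
  define S where "S = nS nrm"
  have S0: "S \<ge> 0" unfolding S_def by (rule nS_nonneg[OF nrm])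
  define \<delta> where "\<delta> = \<epsilon> / (S + 1)"
  have \<delta>: "\<delta> > 0" using \<epsilon> S0 \<delta>_def by simp
  have "\<forall>j. \<exists>R. reps \<sigma> R \<and> (\<forall>u\<in>V. \<forall>y\<in>K. \<bar>G u y $ j - R u y\<bar> < \<delta>)"
    using Gj \<delta> unfolding approx_def by blast
  from choice[OF this] obtain R where R0: "\<forall>j. reps \<sigma> (R j) \<and> (\<forall>u\<in>V. \<forall>y\<in>K. \<bar>G u y $ j - R j u y\<bar> < \<delta>)"
    by blast
  have R: "\<And>j. reps \<sigma> (R j)" "\<And>j u y. u \<in> V \<Longrightarrow> y \<in> K \<Longrightarrow> \<bar>G u y $ j - R j u y\<bar> < \<delta>"
    using R0 by auto
  define F where "F u y = (\<Sum>j\<in>UNIV. R j u y *\<^sub>R (axis j 1 :: real^'m))" for u y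
  have "repv \<sigma> (\<lambda>u y. \<Sum>j\<in>UNIV. R j u y *\<^sub>R (axis j 1 :: real^'m))"
    by (rule repv_sum) (auto intro: reps_to_repv R(1))
  then have "repv \<sigma> F" unfolding F_def[abs_def] .
  from repv_pad[OF this] obtain N :: nat and \<omega> :: "nat \<Rightarrow> real ^ 'd" and \<zeta> :: "nat \<Rightarrow> real" and a :: "nat \<Rightarrow> 'a \<Rightarrow> real ^ 'm"
    where Na: "N \<ge> 1" "\<forall>k<N. topological_nn \<sigma> (a k)" "\<forall>u y. F u y = (\<Sum>k<N. \<sigma> (\<omega> k \<bullet> y + \<zeta> k) *\<^sub>R a k u)"
    by blast
  have err: "nrm (G u y - F u y) \<le> \<delta> * S" if "u \<in> V" "y \<in> K" for u y
  proof -
    have "G u y - F u y = (\<Sum>j\<in>UNIV. (G u y $ j - R j u y) *\<^sub>R (axis j 1 :: real^'m))"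
      unfolding F_def
      by (subst (1) basis_exp_R[of "G u y", symmetric]) (simp add: sum_subtractf scaleR_left_diff_distrib)
    also have "nrm \<dots> \<le> \<delta> * S" unfolding S_def
      by (rule nrm_comb[OF nrm]) (use R(2)[OF that] in \<open>simp add: less_imp_le\<close>)
    finally show ?thesis .
  qed
  have "\<delta> * S < \<epsilon>"
  proof -
    have "\<delta> * S = \<epsilon> * (S / (S + 1))" unfolding \<delta>_def by simp
    also have "\<dots> < \<epsilon> * 1" using \<epsilon> S0 by (intro mult_strict_left_mono) auto
    finally show ?thesis by simp
  qed
  have "\<forall>u\<in>V. \<forall>y\<in>K. nrm (G u y - (\<Sum>k<N. \<sigma> (\<omega> k \<bullet> y + \<zeta> k) *\<^sub>R a k u)) \<le> \<delta> * S"
    using err Na(3) by simp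
  then have "\<exists>c<\<epsilon>. \<forall>u\<in>V. \<forall>y\<in>K. nrm (G u y - (\<Sum>k<N. \<sigma> (\<omega> k \<bullet> y + \<zeta> k) *\<^sub>R a k u)) \<le> c"
    using \<open>\<delta> * S < \<epsilon>\<close> by blast
  then show ?thesis using Na(1,2) by blast
qed


end
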